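(* Let $\alpha\in\mathbb{R}\setminus\{2\}$, $p\ge1$, $p^*=\frac{p}{p-1}$, and let $f$ be a differentiable, strictly decreasing ($f'<0$) probability density function. Then $$N_{1+(2-\alpha)p^*}^{\alpha-2}[f]\,e^{-\alpha S[f]}\;\ge\;\mathfrak{K}\,e^{\langle\log|f'|\rangle_f},\qquad \mathfrak{K}=|2-\alpha|\,K^{(0)}_{p,1}.$$ Moreover, equality holds only when $f=\mathcal{U}_\alpha[g_{p,1}]$.
   Context: $\langle h\rangle_f=\int h f$. $N_\lambda[f]=\left(\int f^\lambda\right)^{1/(1-\lambda)}$; $S[f]=-\int f\log f$; $\sigma_q[f]=\left(\int|x|^qf\right)^{1/q}$ (for $q=\infty$, the essential supremum of $|x|$ on the support). $g_{p,1}(x)=a_{p,1}e^{-|x|^{p^*}}$ with $a_{p,1}=\frac{p^*}{2\Gamma(1/p^* )}$, and $K^{(0)}_{p,1}=\sigma_{p^*}[g_{p,1}]/e^{S[g_{p,1}]}$ is the optimal constant of the moment–entropy inequality $\sigma_{p^*}[h]/e^{S[h]}\ge K^{(0)}_{p,1}$. Up transform: for $\alpha\ne2$, $\mathcal{U}_\alpha[f](u)=|(\alpha-2)x(u)|^{1/(2-\alpha)}$, where $x(u)$ inverts a change of variable $u(x)$ with $u'(x)=-|(\alpha-2)x|^{1/(\alpha-2)}f(x)$ (defined up to translation). *)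

theory Defs
  imports "HOL-Analysis.Analysis" "HOL-Probability.Essential_Supremum"
begin

definition pconj :: "real \<Rightarrow> ereal" where
  "pconj p = (if p = 1 then \<infinity> else ereal (p / (p - 1)))"

definition fmean :: "(real \<Rightarrow> real) \<Rightarrow> (real \<Rightarrow> real) \<Rightarrow> real" where
  "fmean h f = (\<integral>x. h x * f x \<partial>lborel)"

definition shannon :: "(real \<Rightarrow> real) \<Rightarrow> real" where
  "shannon f = - (\<integral>x. f x * ln (f x) \<partial>lborel)"

text \<open>Renyi entropy power N_lambda[f] = (int f^lambda)^(1/(1-lambda)); the integral runs
  over the support (0 powr a = 0).  For lambda = +infinity / -infinity the limiting values
  1 / ess sup f and ess sup over the support of 1/f are used.\<close>
definition renyiN :: "ereal \<Rightarrow> (real \<Rightarrow> real) \<Rightarrow> real" where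
  "renyiN lam f =
     (if lam = \<infinity> then 1 / real_of_ereal (esssup (density lborel f) (\<lambda>x. ereal (f x)))
      else if lam = -\<infinity> then real_of_ereal (esssup (density lborel f) (\<lambda>x. ereal (1 / f x)))
      else (\<integral>x. f x powr real_of_ereal lam \<partial>lborel) powr (1 / (1 - real_of_ereal lam)))"

text \<open>q-th absolute moment sigma_q[h]; for q = infinity the essential supremum of |x|
  on the support of h.\<close>
definition sigma_mom :: "ereal \<Rightarrow> (real \<Rightarrow> real) \<Rightarrow> real" where
  "sigma_mom q h =
     (if q = \<infinity> then real_of_ereal (esssup (density lborel h) (\<lambda>x. ereal \<bar>x\<bar>))
      else (\<integral>x. \<bar>x\<bar> powr real_of_ereal q * h x \<partial>lborel) powr (1 / real_of_ereal q))"

text \<open>g_{p,1}(x) = a e^{-|x|^{p*}}, a = p*/(2 Gamma(1/p*)); for p = 1 (p* = infinity) the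
  limit, the uniform density on (-1,1).\<close>
definition g_p1 :: "real \<Rightarrow> real \<Rightarrow> real" where
  "g_p1 p x =
     (if p = 1 then (if \<bar>x\<bar> < 1 then 1 / 2 else 0)
      else (let ps = p / (p - 1) in ps / (2 * Gamma (1 / ps)) * exp (- (\<bar>x\<bar> powr ps))))"

text \<open>Optimal constant of the moment-entropy inequality.\<close>
definition K0 :: "real \<Rightarrow> real" where
  "K0 p = sigma_mom (pconj p) (g_p1 p) / exp (shannon (g_p1 p))"

text \<open>F = U_alpha[g]: for some choice of the change of variable u (defined up to translation),
  u'(x) = -|(alpha-2)x|^{1/(alpha-2)} g(x) on the support D of g (x /= 0), and
  F(u(x)) = |(alpha-2) x|^{1/(2-alpha)} for x in D, F vanishing off u(D).\<close>
definition up_transform_eq :: "real \<Rightarrow> (real \<Rightarrow> real) \<Rightarrow> (real \<Rightarrow> real) \<Rightarrow> bool" where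
  "up_transform_eq \<alpha> g F \<longleftrightarrow>
     (\<exists>u :: real \<Rightarrow> real.
        (\<forall>x. x \<noteq> 0 \<and> g x > 0 \<longrightarrow>
           (u has_real_derivative (- (\<bar>(\<alpha> - 2) * x\<bar> powr (1 / (\<alpha> - 2)) * g x))) (at x)) \<and>
        (\<forall>x. x \<noteq> 0 \<and> g x > 0 \<longrightarrow> F (u x) = \<bar>(\<alpha> - 2) * x\<bar> powr (1 / (2 - \<alpha>))) \<and>
        (\<forall>v. v \<notin> u ` {x. x \<noteq> 0 \<and> g x > 0} \<longrightarrow> F v = 0))"

end

theory Submission
  imports Defs
begin

lemma open_sets_lebesgue: "open (S::real set) \<Longrightarrow> S \<in> sets lebesgue"
  by (metis borel_open sets_completionI_sets sets_lborel)

lemma powr_base_inj: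
  fixes a b q :: real
  assumes "0 \<le> a" "0 \<le> b" "q \<noteq> 0" "a powr q = b powr q"
  shows "a = b"
proof (cases "a = 0 \<or> b = 0")
  case True
  then show ?thesis
  proof
    assume "a = 0" then have "b powr q = 0" using assms(4) by simp
    then show ?thesis using \<open>a = 0\<close> by simp
  next
    assume "b = 0" then have "a powr q = 0" using assms(4) by simp
    then show ?thesis using \<open>b = 0\<close> by simp
  qed
next
  case False
  then have "a > 0" "b > 0" using assms by auto
  then have "(a powr q) powr (1/q) = a" "(b powr q) powr (1/q) = b"
    using assms(3) by (simp_all add: powr_powr)
  then show ?thesis using assms(4) by metis
qed

lemma abs_int_cmult: "(f::real\<Rightarrow>real) absolutely_integrable_on S \<Longrightarrow> (\<lambda>x. c * f x) absolutely_integrable_on S"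
  by (rule set_integrable_mult_right)

lemma abs_int_cdiv: "(f::real\<Rightarrow>real) absolutely_integrable_on S \<Longrightarrow> (\<lambda>x. f x / c) absolutely_integrable_on S"
  by (rule set_integrable_divide)

lemma cov_pos:
  fixes g h F :: "real \<Rightarrow> real"
  assumes S: "S \<in> sets lebesgue"
    and der: "\<And>y. y \<in> S \<Longrightarrow> (g has_field_derivative g' y) (at y within S)"
    and inj: "inj_on g S" and img: "g ` S = T"
    and F: "F absolutely_integrable_on T" "integral T F = b"
    and eq: "\<And>y. y \<in> S \<Longrightarrow> \<bar>g' y\<bar> * F (g y) = h y"
  shows "h absolutely_integrable_on S \<and> integral S h = b"
proof -
  have "(\<lambda>x. \<bar>g' x\<bar> * F (g x)) absolutely_integrable_on S \<and>
           integral S (\<lambda>x. \<bar>g' x\<bar> * F (g x)) = b"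
    using has_absolute_integral_change_of_variables_1'[OF S der inj, of F b] F img by auto
  moreover have "set_integrable lebesgue S (\<lambda>x. \<bar>g' x\<bar> * F (g x)) = set_integrable lebesgue S h"
    by (rule set_integrable_cong) (auto simp: eq)
  moreover have "integral S (\<lambda>x. \<bar>g' x\<bar> * F (g x)) = integral S h"
    by (rule integral_cong) (simp add: eq)
  ultimately show ?thesis by simp
qed

lemma Gamma_pos_int:
  fixes x :: real assumes "x > 0"
  shows "(\<lambda>t. t powr (x - 1) / exp t) absolutely_integrable_on {0<..} \<and>
         integral {0<..} (\<lambda>t. t powr (x - 1) / exp t) = Gamma x"
proof -
  have "((\<lambda>t. t powr (x - 1) / exp t) has_integral Gamma x) {0..}"
    using Gamma_integral_real[OF assms] .
  then have h: "((\<lambda>t. t powr (x - 1) / exp t) has_integral Gamma x) {0<..}"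
    by (rule has_integral_spike_set_eq[THEN iffD1, rotated 2])
       (auto intro: negligible_subset[of "{0}"])
  then have "(\<lambda>t. t powr (x - 1) / exp t) absolutely_integrable_on {0<..}"
    by (intro nonnegative_absolutely_integrable_1) (auto simp: has_integral_integrable)
  with h show ?thesis by (simp add: integral_unique)
qed

lemma exp_powr_int:
  fixes q s :: real assumes q: "q > 0" and s: "s > 0"
  shows "(\<lambda>x. exp (-((x/s) powr q))) absolutely_integrable_on {0<..} \<and>
         integral {0<..} (\<lambda>x. exp (-((x/s) powr q))) = s * Gamma (1/q) / q"
proof (rule cov_pos[where g="\<lambda>y. (y/s) powr q" and g'="\<lambda>y. q * (y/s) powr (q-1) * (1/s)"
      and T="{0<..}" and F="\<lambda>t. s/q * (t powr (1/q - 1) / exp t)"])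
  show "{0::real<..} \<in> sets lebesgue" by (simp add: open_sets_lebesgue)
  show "((\<lambda>y. (y/s) powr q) has_field_derivative q * (y/s) powr (q-1) * (1/s)) (at y within {0<..})"
    if "y \<in> {0<..}" for y
  proof -
    have d1: "((\<lambda>y. y/s) has_real_derivative 1/s) (at y within {0<..})"
      using DERIV_cdivide[OF DERIV_ident, of s] by (simp add: has_field_derivative_at_within)
    have "y/s > 0" using that s by simp
    from DERIV_chain2[OF has_real_derivative_powr[OF this, of q] d1] show ?thesis .
  qed
  show "inj_on (\<lambda>y. (y/s) powr q) {0<..}"
  proof (rule inj_onI)
    fix x y :: real assume xy: "x \<in> {0<..}" "y \<in> {0<..}" and eq: "(x/s) powr q = (y/s) powr q"
    have "0 \<le> x/s" "0 \<le> y/s" "q \<noteq> 0" using xy s q by simp_all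
    then have "x/s = y/s" using powr_base_inj eq by blast
    then show "x = y" using s by simp
  qed
  show "(\<lambda>y. (y/s) powr q) ` {0<..} = {0<..}"
  proof
    show "(\<lambda>y. (y/s) powr q) ` {0<..} \<subseteq> {0<..}" using s by auto
    show "{0<..} \<subseteq> (\<lambda>y. (y/s) powr q) ` {0<..}"
    proof
      fix t :: real assume t: "t \<in> {0<..}"
      have "((s * t powr (1/q))/s) powr q = (t powr (1/q)) powr q" using s by simp
      also have "\<dots> = t" using t q by (simp add: powr_powr)
      finally have "t = ((s * t powr (1/q))/s) powr q" by simp
      moreover have "s * t powr (1/q) \<in> {0<..}" using s t by simp
      ultimately show "t \<in> (\<lambda>y. (y/s) powr q) ` {0<..}" by blast
    qed
  qed
  have G: "(\<lambda>t. t powr (1/q - 1) / exp t) absolutely_integrable_on {0<..} \<and>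
         integral {0<..} (\<lambda>t. t powr (1/q - 1) / exp t) = Gamma (1/q)"
    using Gamma_pos_int[of "1/q"] q by simp
  show "(\<lambda>t. s/q * (t powr (1/q - 1) / exp t)) absolutely_integrable_on {0<..}"
    by (rule abs_int_cmult[OF conjunct1[OF G]])
  show "integral {0<..} (\<lambda>t. s/q * (t powr (1/q - 1) / exp t)) = s * Gamma (1/q) / q"
    by (simp only: integral_mult_right conjunct2[OF G]) simp
  show "\<bar>q * (y/s) powr (q-1) * (1/s)\<bar> * (s/q * (((y/s) powr q) powr (1/q - 1) / exp ((y/s) powr q)))
        = exp (-((y/s) powr q))" if "y \<in> {0<..}" for y
  proof -
    define z where "z = y/s"
    have z: "z > 0" using that s by (simp add: z_def)
    have e1: "(z powr q) powr (1/q - 1) = z powr (1 - q)"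
      using q by (simp add: powr_powr algebra_simps)
    have e2: "z powr (q-1) * z powr (1 - q) = 1"
      using z by (simp add: powr_add[symmetric])
    have ab: "\<bar>q * z powr (q-1) * (1/s)\<bar> = q * z powr (q-1) * (1/s)" using q s by simp
    have alg: "\<And>A B E :: real. q * A * (1/s) * (s/q * (B / E)) = A * B / E"
      using q s by (simp add: field_simps)
    have "\<bar>q * z powr (q-1) * (1/s)\<bar> * (s/q * ((z powr q) powr (1/q - 1) / exp (z powr q)))
       = (z powr (q-1) * z powr (1 - q)) / exp (z powr q)"
      unfolding ab alg e1 ..
    also have "\<dots> = exp (-(z powr q))" unfolding e2 by (simp add: exp_minus divide_inverse)
    finally show ?thesis by (simp add: z_def)
  qed
qed

lemma xpow_exp_int:
  fixes q :: real assumes q: "q > 0"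
  shows "(\<lambda>x. x powr q * exp (-(x powr q))) absolutely_integrable_on {0<..} \<and>
         integral {0<..} (\<lambda>x. x powr q * exp (-(x powr q))) = Gamma (1/q) / q^2"
proof (rule cov_pos[where g="\<lambda>y. y powr q" and g'="\<lambda>y. q * y powr (q-1)"
      and T="{0<..}" and F="\<lambda>t. (t powr (1/q + 1 - 1) / exp t) / q"])
  show "{0::real<..} \<in> sets lebesgue" by (simp add: open_sets_lebesgue)
  show "((\<lambda>y. y powr q) has_field_derivative q * y powr (q-1)) (at y within {0<..})"
    if "y \<in> {0<..}" for y
    using that has_real_derivative_powr[of y q] has_field_derivative_at_within by auto
  show "inj_on (\<lambda>y. y powr q) {0<..}"
  proof (rule inj_onI)
    fix x y :: real assume xy: "x \<in> {0<..}" "y \<in> {0<..}" and eq: "x powr q = y powr q"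
    have "0 \<le> x" "0 \<le> y" "q \<noteq> 0" using xy q by simp_all
    then show "x = y" using powr_base_inj eq by blast
  qed
  show "(\<lambda>y. y powr q) ` {0<..} = {0<..}"
  proof
    show "(\<lambda>y. y powr q) ` {0<..} \<subseteq> {0<..}" by auto
    show "{0<..} \<subseteq> (\<lambda>y. y powr q) ` {0<..}"
    proof
      fix t :: real assume "t \<in> {0<..}"
      then have "t = (t powr (1/q)) powr q" "t powr (1/q) \<in> {0<..}"
        using q by (auto simp: powr_powr)
      then show "t \<in> (\<lambda>y. y powr q) ` {0<..}" by blast
    qed
  qed
  have G: "(\<lambda>t. t powr (1/q + 1 - 1) / exp t) absolutely_integrable_on {0<..} \<and>
         integral {0<..} (\<lambda>t. t powr (1/q + 1 - 1) / exp t) = Gamma (1/q + 1)"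
  proof -
    have "0 < 1/q" using q by simp
    then have "0 < 1/q + 1" by linarith
    from Gamma_pos_int[OF this] show ?thesis by simp
  qed
  show "(\<lambda>t. (t powr (1/q + 1 - 1) / exp t) / q) absolutely_integrable_on {0<..}"
    by (rule abs_int_cdiv[OF conjunct1[OF G]])
  have "1/q \<notin> \<int>\<^sub>\<le>\<^sub>0" using q by (auto dest: nonpos_Ints_nonpos)
  then have "Gamma (1/q + 1) = (1/q) * Gamma (1/q)" by (rule Gamma_plus1)
  then show "integral {0<..} (\<lambda>t. (t powr (1/q + 1 - 1) / exp t) / q) = Gamma (1/q) / q^2"
    using G by (simp only: integral_divide) (simp add: power2_eq_square)
  show "\<bar>q * y powr (q-1)\<bar> * (((y powr q) powr (1/q + 1 - 1) / exp (y powr q)) / q)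
        = y powr q * exp (-(y powr q))" if "y \<in> {0<..}" for y
  proof -
    have y: "y > 0" using that by simp
    have e1: "(y powr q) powr (1/q + 1 - 1) = y"
      using q y by (simp add: powr_powr)
    have e2: "y powr (q-1) * y = y powr q"
      using y by (simp add: powr_diff)
    have ab: "\<bar>q * y powr (q-1)\<bar> = q * y powr (q-1)" using q by simp
    have alg: "\<And>A B E :: real. q * A * (B / E / q) = A * B / E"
      using q by (simp add: field_simps)
    have "\<bar>q * y powr (q-1)\<bar> * (((y powr q) powr (1/q + 1 - 1) / exp (y powr q)) / q)
       = y powr (q-1) * y / exp (y powr q)"
      unfolding ab alg e1 ..
    also have "\<dots> = y powr q * exp (-(y powr q))" unfolding e2 by (simp add: exp_minus divide_inverse)
    finally show ?thesis .
  qed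
qed

lemma abs_UNIV_to_lborel:
  fixes h :: "real \<Rightarrow> real"
  assumes "h absolutely_integrable_on UNIV" "h \<in> borel_measurable borel"
  shows "integrable lborel h \<and> (\<integral>x. h x \<partial>lborel) = integral UNIV h"
proof -
  have "integrable lebesgue h" using assms(1) by (simp add: set_integrable_def)
  then have "integrable lborel h"
    using integrable_completion[of h lborel] assms(2) by simp
  then show ?thesis by (simp add: integral_lborel)
qed

lemma lborel_to_abs:
  fixes h :: "real \<Rightarrow> real"
  assumes "integrable lborel h" "\<And>x. x \<notin> I \<Longrightarrow> h x = 0"
  shows "h absolutely_integrable_on I \<and> integral I h = (\<integral>x. h x \<partial>lborel)"
proof -
  have m: "h \<in> borel_measurable lborel" using assms(1) by auto
  have "integrable lebesgue h"
    using integrable_completion[of h lborel] assms(1) m by simp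
  then have "h absolutely_integrable_on UNIV" by (simp add: set_integrable_def)
  moreover have "(\<lambda>x. if x \<in> I then h x else 0) = h" using assms(2) by auto
  ultimately have "h absolutely_integrable_on I"
    using absolutely_integrable_restrict_UNIV[of I h] by simp
  moreover have "integral I h = integral UNIV h"
    using integral_restrict_UNIV[of I h, symmetric] \<open>(\<lambda>x. if x \<in> I then h x else 0) = h\<close> by simp
  ultimately show ?thesis using integral_lborel[OF assms(1)] by simp
qed

lemma even_full:
  fixes \<phi> :: "real \<Rightarrow> real"
  assumes ab: "\<phi> absolutely_integrable_on {0<..}" "integral {0<..} \<phi> = v"
    and cont: "continuous_on UNIV (\<lambda>x. \<phi> \<bar>x\<bar>)"
  shows "integrable lborel (\<lambda>x. \<phi> \<bar>x\<bar>) \<and> (\<integral>x. \<phi> \<bar>x\<bar> \<partial>lborel) = 2 * v"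
proof -
  let ?h = "\<lambda>x. \<phi> \<bar>x\<bar>"
  have P: "?h absolutely_integrable_on {0<..} \<and> integral {0<..} ?h = v"
  proof -
    have "set_integrable lebesgue {0<..} ?h = set_integrable lebesgue {0<..} \<phi>"
      by (rule set_integrable_cong) auto
    moreover have "integral {0<..} ?h = integral {0<..} \<phi>"
      by (rule integral_cong) auto
    ultimately show ?thesis using ab by simp
  qed
  have N: "?h absolutely_integrable_on {..<0} \<and> integral {..<0} ?h = v"
  proof (rule cov_pos[where g="\<lambda>y. -y" and g'="\<lambda>y. -1" and T="{0<..}" and F=\<phi>])
    show "{..<0::real} \<in> sets lebesgue" by (simp add: open_sets_lebesgue)
    show "((\<lambda>y. -y) has_field_derivative -1) (at y within {..<0})" for y :: real
      by (rule DERIV_minus[OF DERIV_ident])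
    show "inj_on (\<lambda>y::real. -y) {..<0}" by (auto simp: inj_on_def)
    show "(\<lambda>y::real. -y) ` {..<0} = {0<..}"
    proof
      show "(\<lambda>y::real. -y) ` {..<0} \<subseteq> {0<..}" by auto
      show "{0<..} \<subseteq> (\<lambda>y::real. -y) ` {..<0}"
      proof
        fix t :: real assume "t \<in> {0<..}"
        then have "t = - (- t)" "- t \<in> {..<0}" by auto
        then show "t \<in> (\<lambda>y::real. -y) ` {..<0}" by blast
      qed
    qed
    show "\<phi> absolutely_integrable_on {0<..}" by (rule ab(1))
    show "integral {0<..} \<phi> = v" by (rule ab(2))
    show "\<bar>-1\<bar> * \<phi> (- y) = \<phi> \<bar>y\<bar>" if "y \<in> {..<0}" for y :: real
      using that by simp
  qed
  have hi1: "(?h has_integral v) {..<0}" "(?h has_integral v) {0<..}"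
  proof -
    have i1: "?h integrable_on {..<0}" "?h integrable_on {0<..}"
      using N P set_lebesgue_integral_eq_integral(1) by blast+
    show "(?h has_integral v) {..<0}"
      using integrable_integral[OF i1(1)] conjunct2[OF N] by (simp only:)
    show "(?h has_integral v) {0<..}"
      using integrable_integral[OF i1(2)] conjunct2[OF P] by (simp only:)
  qed
  have "(?h has_integral (v + v)) ({..<0} \<union> {0<..})"
  proof (rule has_integral_Un[OF hi1])
    have "{..<0::real} \<inter> {0<..} = {}" by auto
    then show "negligible ({..<0::real} \<inter> {0<..})" by simp
  qed
  then have "(?h has_integral (2 * v)) ({..<0} \<union> {0<..})" by (simp only: mult_2)
  have n1: "negligible {x \<in> ({..<0} \<union> {0<..}) - UNIV. ?h x \<noteq> 0}" by simp
  have "{x \<in> UNIV - ({..<0} \<union> {0<..}). ?h x \<noteq> 0} \<subseteq> {0::real}" by auto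
  then have n2: "negligible {x \<in> UNIV - ({..<0} \<union> {0<..}). ?h x \<noteq> 0}"
    using negligible_subset negligible_sing by metis
  have hU: "(?h has_integral (2 * v)) UNIV"
    using has_integral_spike_set_eq[OF n1 n2] \<open>(?h has_integral (2 * v)) ({..<0} \<union> {0<..})\<close> by blast
  have "?h absolutely_integrable_on ({..<0} \<union> {0<..})"
    using N P absolutely_integrable_Un by blast
  then have aU: "?h absolutely_integrable_on UNIV"
    using absolutely_integrable_spike_set_eq[OF n1 n2] by blast
  have "?h \<in> borel_measurable borel"
    using cont by (rule borel_measurable_continuous_onI)
  then show ?thesis using abs_UNIV_to_lborel[OF aU] hU by (simp add: integral_unique)
qed

lemma g_p1_gt1:
  assumes "p > 1"
  shows "g_p1 p = (\<lambda>x. (p/(p-1)) / (2 * Gamma (1/(p/(p-1)))) * exp (-(\<bar>x\<bar> powr (p/(p-1)))))"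
  using assms by (auto simp: g_p1_def Let_def fun_eq_iff)

lemma K0_gt1:
  fixes p :: real
  assumes p: "p > 1"
  defines "q \<equiv> p/(p-1)"
  defines "a \<equiv> q / (2 * Gamma (1/q))"
  shows "K0 p = a * q powr (-1/q) * exp (-1/q)"
proof -
  have q: "q > 0" using p by (simp add: q_def)
  have Gp: "Gamma (1/q) > 0" using q by (intro Gamma_real_pos) simp
  have a: "a > 0" using q Gp by (simp add: a_def)
  have g: "g_p1 p = (\<lambda>x. a * exp (-(\<bar>x\<bar> powr q)))"
    using g_p1_gt1[OF p] by (simp add: a_def q_def)
  have pc: "pconj p = ereal q" using p by (simp add: pconj_def q_def)
  have cpow: "continuous_on UNIV (\<lambda>x::real. \<bar>x\<bar> powr q)"
    using q by (intro continuous_on_powr') (auto intro: continuous_intros)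
  have I0: "integrable lborel (\<lambda>x. a * exp (-(\<bar>x\<bar> powr q))) \<and>
       (\<integral>x. a * exp (-(\<bar>x\<bar> powr q)) \<partial>lborel) = 2 * (a * (1 * Gamma (1/q) / q))"
  proof (rule even_full[where \<phi>="\<lambda>y. a * exp (-(y powr q))"])
    have E: "(\<lambda>x. exp (-(x powr q))) absolutely_integrable_on {0<..} \<and>
         integral {0<..} (\<lambda>x. exp (-(x powr q))) = 1 * Gamma (1/q) / q"
      using exp_powr_int[OF q, of 1] by (simp only: div_by_1)
    show "(\<lambda>y. a * exp (-(y powr q))) absolutely_integrable_on {0<..}"
      by (rule abs_int_cmult[OF conjunct1[OF E]])
    show "integral {0<..} (\<lambda>y. a * exp (-(y powr q))) = a * (1 * Gamma (1/q) / q)"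
      by (simp only: integral_mult_right conjunct2[OF E])
    show "continuous_on UNIV (\<lambda>x. a * exp (-(\<bar>x\<bar> powr q)))"
      using cpow by (intro continuous_on_mult continuous_on_const continuous_on_exp continuous_on_minus)
  qed
  have I1: "integrable lborel (\<lambda>x. a * (\<bar>x\<bar> powr q * exp (-(\<bar>x\<bar> powr q)))) \<and>
       (\<integral>x. a * (\<bar>x\<bar> powr q * exp (-(\<bar>x\<bar> powr q))) \<partial>lborel) = 2 * (a * (Gamma (1/q) / q^2))"
  proof (rule even_full[where \<phi>="\<lambda>y. a * (y powr q * exp (-(y powr q)))"])
    have E: "(\<lambda>x. x powr q * exp (-(x powr q))) absolutely_integrable_on {0<..} \<and>
         integral {0<..} (\<lambda>x. x powr q * exp (-(x powr q))) = Gamma (1/q) / q^2"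
      using xpow_exp_int[OF q] by simp
    show "(\<lambda>y. a * (y powr q * exp (-(y powr q)))) absolutely_integrable_on {0<..}"
      by (rule abs_int_cmult[OF conjunct1[OF E]])
    show "integral {0<..} (\<lambda>y. a * (y powr q * exp (-(y powr q)))) = a * (Gamma (1/q) / q^2)"
      by (simp only: integral_mult_right conjunct2[OF E])
    show "continuous_on UNIV (\<lambda>x. a * (\<bar>x\<bar> powr q * exp (-(\<bar>x\<bar> powr q))))"
      using cpow by (intro continuous_on_mult continuous_on_const continuous_on_exp continuous_on_minus)
  qed
  have Gn: "Gamma (1/q) \<noteq> 0" using Gp by linarith
  have v0: "2 * (a * (1 * Gamma (1/q) / q)) = 1" using Gn q unfolding a_def by (simp add: field_simps)
  have v1: "2 * (a * (Gamma (1/q) / q^2)) = 1/q" using Gn q unfolding a_def by (simp add: field_simps power2_eq_square)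
  have sig: "sigma_mom (pconj p) (g_p1 p) = (1/q) powr (1/q)"
  proof -
    have "(\<lambda>x. \<bar>x\<bar> powr q * (a * exp (-(\<bar>x\<bar> powr q)))) = (\<lambda>x. a * (\<bar>x\<bar> powr q * exp (-(\<bar>x\<bar> powr q))))"
      by (auto simp: fun_eq_iff)
    then show ?thesis using I1 v1 by (simp add: sigma_mom_def pc g)
  qed
  have sh: "shannon (g_p1 p) = 1/q - ln a"
  proof -
    have "(\<lambda>x. a * exp (-(\<bar>x\<bar> powr q)) * ln (a * exp (-(\<bar>x\<bar> powr q))))
       = (\<lambda>x. ln a * (a * exp (-(\<bar>x\<bar> powr q))) - a * (\<bar>x\<bar> powr q * exp (-(\<bar>x\<bar> powr q))))"
      using a by (auto simp: fun_eq_iff ln_mult algebra_simps)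
    moreover have "(\<integral>x. ln a * (a * exp (-(\<bar>x\<bar> powr q))) - a * (\<bar>x\<bar> powr q * exp (-(\<bar>x\<bar> powr q))) \<partial>lborel)
        = ln a * 1 - 1/q"
      using I0 I1 v0 v1 by simp
    ultimately show ?thesis by (simp add: shannon_def g)
  qed
  have "K0 p = (1/q) powr (1/q) / exp (1/q - ln a)" by (simp add: K0_def sig sh)
  also have "\<dots> = a * q powr (-1/q) * exp (-1/q)"
  proof -
    have "exp (1/q - ln a) = exp (1/q) / a" using a by (simp add: exp_diff)
    moreover have "(1/q) powr (1/q) = q powr (-1/q)"
      using q by (simp add: powr_divide powr_minus_divide)
    moreover have "exp (-1/q) = 1 / exp (1/q)" by (simp add: exp_minus field_simps)
    ultimately show ?thesis using a by simp
  qed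
  finally show ?thesis .
qed

lemma ae_ball_false:
  fixes u d :: real
  assumes ae: "AE x in lborel. P x" and d: "d > 0" and nb: "\<forall>x\<in>ball u d. \<not> P x"
  shows False
proof -
  from ae obtain N where N: "{x \<in> space lborel. \<not> P x} \<subseteq> N" "emeasure lborel N = 0" "N \<in> sets lborel"
    by (auto elim!: AE_E)
  have "ball u d \<subseteq> N" using N(1) nb by auto
  then have "emeasure lborel (ball u d) \<le> emeasure lborel N"
    using N(3) by (intro emeasure_mono) auto
  moreover have "emeasure lborel (ball u d) = ennreal (2 * d)"
    using d by (simp add: ball_eq_greaterThanLessThan emeasure_lborel_Ioo)
  ultimately show False using N(2) d by simp
qed

lemma ae_cont_bound:
  fixes h :: "real \<Rightarrow> real"
  assumes ae: "AE x in lborel. x \<in> I \<longrightarrow> ereal (h x) \<le> E"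
    and I: "open I" "u \<in> I" and c: "isCont h u"
  shows "ereal (h u) \<le> E"
proof (rule ccontr)
  assume "\<not> ereal (h u) \<le> E"
  then have "E < ereal (h u)" by simp
  then obtain r where r: "E < ereal r" "ereal r < ereal (h u)" using ereal_dense2 by blast
  then have "r < h u" by simp
  then have "\<forall>\<^sub>F x in at u. r < h x" using c by (simp add: isCont_def order_tendstoD(1))
  then obtain d1 where d1: "d1 > 0" "\<And>x. x \<noteq> u \<Longrightarrow> dist x u < d1 \<Longrightarrow> r < h x"
    by (auto simp: eventually_at)
  obtain d2 where d2: "d2 > 0" "ball u d2 \<subseteq> I" using I open_contains_ball by blast
  define d where "d = min d1 d2"
  have "\<forall>x\<in>ball u d. \<not> (x \<in> I \<longrightarrow> ereal (h x) \<le> E)"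
  proof
    fix x assume x: "x \<in> ball u d"
    then have "x \<in> I" using d2 by (auto simp: d_def)
    moreover have "r < h x"
    proof (cases "x = u")
      case True then show ?thesis using \<open>r < h u\<close> by simp
    next
      case False
      have "dist x u < d1" using x by (simp add: d_def dist_commute)
      then show ?thesis using d1(2)[OF False] by blast
    qed
    moreover have "ereal r < ereal (h x)" using \<open>r < h x\<close> by simp
    then have "E < ereal (h x)" using r(1) by (rule less_trans[rotated])
    ultimately show "\<not> (x \<in> I \<longrightarrow> ereal (h x) \<le> E)" by (simp add: not_le)
  qed
  moreover have "d > 0" using d1 d2 by (simp add: d_def)
  ultimately show False using ae_ball_false[OF ae] by blast
qed

lemma K0_1: "K0 1 = 1/2"
proof -
  define g :: "real \<Rightarrow> real" where "g x = (if \<bar>x\<bar> < 1 then 1/2 else 0)" for x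
  have g: "g_p1 1 = g" by (simp add: g_def g_p1_def fun_eq_iff)
  have gm: "g \<in> borel_measurable borel" unfolding g_def by measurable
  have E: "esssup (density lborel (\<lambda>x. ennreal (g x))) (\<lambda>x. ereal \<bar>x\<bar>) = 1"
  proof (rule antisym)
    show "esssup (density lborel (\<lambda>x. ennreal (g x))) (\<lambda>x. ereal \<bar>x\<bar>) \<le> 1"
    proof (rule esssup_I)
      show "(\<lambda>x. ereal \<bar>x\<bar>) \<in> borel_measurable (density lborel (\<lambda>x. ennreal (g x)))"
        by simp
    next
      show "AE x in density lborel (\<lambda>x. ennreal (g x)). ereal \<bar>x\<bar> \<le> 1"
        using gm by (subst AE_density) (auto simp: g_def)
    qed
  next
    let ?E = "esssup (density lborel (\<lambda>x. ennreal (g x))) (\<lambda>x. ereal \<bar>x\<bar>)"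
    have "AE x in density lborel (\<lambda>x. ennreal (g x)). ereal \<bar>x\<bar> \<le> ?E" by (rule esssup_AE)
    then have "AE x in lborel. 0 < ennreal (g x) \<longrightarrow> ereal \<bar>x\<bar> \<le> ?E"
      using gm by (subst (asm) AE_density) auto
    then have ae: "AE x in lborel. x \<in> {-1<..<1} \<longrightarrow> ereal \<bar>x\<bar> \<le> ?E"
    proof (rule eventually_mono)
      fix x :: real assume h: "0 < ennreal (g x) \<longrightarrow> ereal \<bar>x\<bar> \<le> ?E"
      show "x \<in> {-1<..<1} \<longrightarrow> ereal \<bar>x\<bar> \<le> ?E"
      proof
        assume "x \<in> {-1<..<1}"
        then have "0 < ennreal (g x)" by (auto simp: g_def)
        then show "ereal \<bar>x\<bar> \<le> ?E" using h by blast
      qed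
    qed
    have b: "ereal \<bar>u\<bar> \<le> ?E" if "u \<in> {-1<..<1}" for u
      by (rule ae_cont_bound[OF ae _ that]) (auto intro: continuous_intros)
    show "1 \<le> ?E"
    proof (rule ccontr)
      assume "\<not> 1 \<le> ?E"
      then have "?E < 1" by simp
      then obtain r where r: "?E < ereal r" "r < 1" using ereal_dense2 by force
      define u where "u = (max r 0 + 1) / 2"
      have u: "u \<in> {-1<..<1}" "r < u" "0 < u" using r by (auto simp: u_def)
      have "ereal \<bar>u\<bar> \<le> ?E" by (rule b[OF u(1)])
      then have "ereal u \<le> ?E" using u(3) by simp
      then have "ereal u < ereal r" using r(1) by (rule le_less_trans)
      then show False using u(2) by simp
    qed
  qed
  have S: "shannon g = ln 2"
  proof -
    have "(\<lambda>x. g x * ln (g x)) = (\<lambda>x. (1/2 * ln (1/2)) * indicator {-1<..<1} x)"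
      by (auto simp: fun_eq_iff g_def indicator_def abs_less_iff)
    then have "(\<integral>x. g x * ln (g x) \<partial>lborel) = (1/2 * ln (1/2)) * 2"
      by (simp add: measure_lborel_Ioo)
    then show ?thesis by (simp add: shannon_def ln_div)
  qed
  show ?thesis
    by (simp add: K0_def g sigma_mom_def pconj_def E S)
qed

lemma strict_decr:
  fixes f f' :: "real \<Rightarrow> real"
  assumes I: "is_interval I"
    and deriv: "\<forall>x\<in>I. (f has_real_derivative f' x) (at x)"
    and decr: "\<forall>x\<in>I. f' x < 0"
    and uv: "u \<in> I" "v \<in> I" "u < v"
  shows "f v < f u"
proof (rule DERIV_neg_imp_decreasing[OF uv(3)])
  fix x assume "u \<le> x" "x \<le> v"
  then have "x \<in> I" using I uv unfolding is_interval_1 by blast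
  then show "\<exists>y. (f has_real_derivative y) (at x) \<and> y < 0" using deriv decr by blast
qed

lemma core:
  fixes \<alpha> \<beta> c B L D S :: real and f f' G :: "real \<Rightarrow> real" and I T :: "real set"
  assumes I: "is_interval I" "open I"
    and pos: "\<forall>x\<in>I. f x > 0"
    and deriv: "\<forall>x\<in>I. (f has_real_derivative f' x) (at x)"
    and decr: "\<forall>x\<in>I. f' x < 0"
    and beta: "\<beta> = 2 - \<alpha>" "\<beta> \<noteq> 0" and c: "c = \<bar>\<beta>\<bar>"
    and Gpos: "\<And>x. x > 0 \<Longrightarrow> G x > 0"
    and T: "T \<in> sets lebesgue" "(\<lambda>u. f u powr \<beta> / c) ` I \<subseteq> T"
           "G absolutely_integrable_on T" "\<forall>x\<in>T. 0 \<le> G x" "integral T G \<le> B"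
    and P1: "(f has_integral 1) I"
    and P2: "((\<lambda>x. f x * ln (f x)) has_integral (-S)) I"
    and P3: "((\<lambda>x. ln \<bar>f' x\<bar> * f x) has_integral D) I"
    and P5: "((\<lambda>u. f u * ln (G (f u powr \<beta> / c))) has_integral L) I"
  shows "L + D + \<alpha> * S \<le> B - 1"
proof -
  define X where "X u = f u powr \<beta> / c" for u
  define X' where "X' u = \<beta> * f u powr (\<beta> - 1) * f' u / c" for u
  have cpos: "c > 0" using beta c by simp
  have Xder: "(X has_real_derivative X' u) (at u)" if u: "u \<in> I" for u
  proof -
    have fu: "f u > 0" using pos u by blast
    have d1: "((\<lambda>u. f u powr \<beta>) has_real_derivative \<beta> * f u powr (\<beta> - 1) * f' u) (at u)"
      using DERIV_chain2[OF has_real_derivative_powr[OF fu, of \<beta>] deriv[rule_format, OF u]] .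
    show ?thesis unfolding X_def X'_def using DERIV_cdivide[OF d1, of c] by simp
  qed
  have Xder': "(X has_real_derivative X' u) (at u within I)" if "u \<in> I" for u
    using Xder[OF that] has_field_derivative_at_within by blast
  have Xpos: "X u > 0" if "u \<in> I" for u
  proof -
    have "f u > 0" using pos that by blast
    then have "f u powr \<beta> > 0" by simp
    then show ?thesis using cpos by (simp add: X_def)
  qed
  have inj: "inj_on X I"
  proof (rule inj_onI)
    fix u v assume u: "u \<in> I" and v: "v \<in> I" and eq: "X u = X v"
    have "f u powr \<beta> = f v powr \<beta>" using eq cpos by (simp add: X_def)
    moreover have "0 \<le> f u" "0 \<le> f v" using pos u v by (auto simp: less_imp_le)
    ultimately have fe: "f u = f v" using powr_base_inj beta(2) by blast
    show "u = v"
    proof (rule ccontr)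
      assume "u \<noteq> v"
      then have "u < v \<or> v < u" by linarith
      then show False
        using strict_decr[OF I(1) deriv decr u v] strict_decr[OF I(1) deriv decr v u] fe by auto
    qed
  qed
  have Isets: "I \<in> sets lebesgue" using I(2) by (rule open_sets_lebesgue)
  have Xdiff: "X differentiable_on I"
    unfolding differentiable_on_def
    using Xder' by (blast intro: differentiableI has_field_derivative_imp_has_derivative)
  have Xmeas: "X ` I \<in> sets lebesgue"
    by (rule differentiable_image_in_sets_lebesgue[OF Isets _ Xdiff]) simp
  have XT: "X ` I \<subseteq> T" using T(2) by (simp add: X_def[abs_def])
  have GXI: "G absolutely_integrable_on (X ` I)"
    using set_integrable_subset[OF T(3) Xmeas XT] .
  have GXB: "integral (X ` I) G \<le> B"
  proof -
    have "integral (X ` I) G \<le> integral T G"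
      using integral_subset_le[OF XT set_lebesgue_integral_eq_integral(1)[OF GXI]
          set_lebesgue_integral_eq_integral(1)[OF T(3)] T(4)] .
    then show ?thesis using T(5) by linarith
  qed
  have cov: "(\<lambda>u. \<bar>X' u\<bar> * G (X u)) absolutely_integrable_on I \<and>
             integral I (\<lambda>u. \<bar>X' u\<bar> * G (X u)) = integral (X ` I) G"
    using has_absolute_integral_change_of_variables_1'[OF Isets Xder' inj, of G "integral (X ` I) G"] GXI
    by blast
  then have Q5: "((\<lambda>u. \<bar>X' u\<bar> * G (X u)) has_integral integral (X ` I) G) I"
    using integrable_integral set_lebesgue_integral_eq_integral(1) by metis
  have pw: "f u * ln (G (X u)) + ln \<bar>f' u\<bar> * f u - \<alpha> * (f u * ln (f u))
            \<le> \<bar>X' u\<bar> * G (X u) - f u" if u: "u \<in> I" for u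
  proof -
    define fu where "fu = f u"
    define d where "d = \<bar>f' u\<bar>"
    define Gx where "Gx = G (X u)"
    have fu: "fu > 0" using pos u by (simp add: fu_def)
    have "f' u < 0" using decr u by blast
    then have d: "d > 0" by (simp add: d_def)
    have Gx: "Gx > 0" using Gpos Xpos u by (simp add: Gx_def)
    define t where "t = Gx * d * fu powr (-\<alpha>)"
    have t: "t > 0" using fu d Gx by (simp add: t_def)
    have lnt: "ln t = ln Gx + ln d + (-\<alpha>) * ln fu"
      using fu d Gx by (simp add: t_def ln_mult ln_powr)
    have "ln t \<le> t - 1" using t by (rule ln_le_minus_one)
    then have "fu * ln t \<le> fu * (t - 1)" using fu by (simp add: mult_left_mono)
    moreover have "\<bar>X' u\<bar> = fu powr (\<beta> - 1) * d"
    proof -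
      have "\<bar>X' u\<bar> = \<bar>\<beta>\<bar> * fu powr (\<beta> - 1) * d / c"
        unfolding X'_def fu_def d_def using cpos by (simp add: abs_mult)
      then show ?thesis using c cpos by simp
    qed
    moreover have "fu * t = fu powr (\<beta> - 1) * d * Gx"
    proof -
      have "fu * fu powr (-\<alpha>) = fu powr (\<beta> - 1)"
        using fu beta(1) by (simp add: powr_add[symmetric] powr_mult_base)
      then show ?thesis unfolding t_def by (simp add: algebra_simps)
    qed
    ultimately have "fu * ln Gx + ln d * fu - \<alpha> * (fu * ln fu) \<le> \<bar>X' u\<bar> * Gx - fu"
      using lnt by (simp add: algebra_simps)
    then show ?thesis by (simp add: fu_def d_def Gx_def)
  qed
  have P5': "((\<lambda>u. f u * ln (G (X u))) has_integral L) I" using P5 by (simp add: X_def)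
  have LHS: "((\<lambda>u. f u * ln (G (X u)) + ln \<bar>f' u\<bar> * f u - \<alpha> * (f u * ln (f u)))
              has_integral (L + D - \<alpha> * (-S))) I"
    by (intro has_integral_diff has_integral_add has_integral_mult_right P5' P3 P2)
  have RHS: "((\<lambda>u. \<bar>X' u\<bar> * G (X u) - f u) has_integral (integral (X ` I) G - 1)) I"
    by (intro has_integral_diff Q5 P1)
  have "L + D - \<alpha> * (-S) \<le> integral (X ` I) G - 1"
    using has_integral_le[OF LHS RHS] pw by blast
  then show ?thesis using GXB by simp
qed

lemma abs_hasint:
  fixes h :: "real \<Rightarrow> real"
  assumes "h absolutely_integrable_on I \<and> integral I h = v"
  shows "(h has_integral v) I"
proof -
  have "h integrable_on I" using assms set_lebesgue_integral_eq_integral(1) by blast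
  then have "(h has_integral integral I h) I" by (rule integrable_integral)
  then show ?thesis using assms by simp
qed

lemma common_pieces:
  fixes f f' :: "real \<Rightarrow> real" and I :: "real set"
  assumes supp: "\<forall>x. x \<notin> I \<longrightarrow> f x = 0"
    and dens: "integrable lborel f" "(\<integral>x. f x \<partial>lborel) = 1"
    and fin_S: "integrable lborel (\<lambda>x. f x * ln (f x))"
    and fin_D: "integrable lborel (\<lambda>x. ln \<bar>f' x\<bar> * f x)"
  shows "(f has_integral 1) I"
    "((\<lambda>x. f x * ln (f x)) has_integral (- shannon f)) I"
    "((\<lambda>x. ln \<bar>f' x\<bar> * f x) has_integral (fmean (\<lambda>x. ln \<bar>f' x\<bar>) f)) I"
proof -
  show "(f has_integral 1) I"
    using abs_hasint[OF lborel_to_abs[OF dens(1)]] supp dens(2) by auto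
  show "((\<lambda>x. f x * ln (f x)) has_integral (- shannon f)) I"
    using abs_hasint[OF lborel_to_abs[OF fin_S]] supp by (auto simp: shannon_def)
  show "((\<lambda>x. ln \<bar>f' x\<bar> * f x) has_integral (fmean (\<lambda>x. ln \<bar>f' x\<bar>) f)) I"
    using abs_hasint[OF lborel_to_abs[OF fin_D]] supp by (auto simp: fmean_def)
qed

lemma case_gt1:
  fixes \<alpha> p :: real and f f' :: "real \<Rightarrow> real" and I :: "real set"
  assumes alpha: "\<alpha> \<noteq> 2" and p: "p > 1"
    and I: "is_interval I" "open I" "I \<noteq> {}"
    and supp: "\<forall>x\<in>I. f x > 0" "\<forall>x. x \<notin> I \<longrightarrow> f x = 0"
    and deriv: "\<forall>x\<in>I. (f has_real_derivative f' x) (at x)"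
    and decr: "\<forall>x\<in>I. f' x < 0"
    and dens: "integrable lborel f" "(\<integral>x. f x \<partial>lborel) = 1"
    and fin_S: "integrable lborel (\<lambda>x. f x * ln (f x))"
    and fin_D: "integrable lborel (\<lambda>x. ln \<bar>f' x\<bar> * f x)"
    and fin_N: "integrable lborel (\<lambda>x. f x powr (1 + (2 - \<alpha>) * (p / (p - 1))))"
  shows "renyiN (1 + ereal (2 - \<alpha>) * pconj p) f powr (\<alpha> - 2) * exp (- \<alpha> * shannon f)
           > \<bar>2 - \<alpha>\<bar> * K0 p * exp (fmean (\<lambda>x. ln \<bar>f' x\<bar>) f)"
proof -
  define q where "q = p / (p - 1)"
  define \<beta> where "\<beta> = 2 - \<alpha>"
  define c where "c = \<bar>\<beta>\<bar>"
  define lam where "lam = 1 + \<beta> * q"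
  define a where "a = q / (2 * Gamma (1/q))"
  define S where "S = shannon f"
  define D where "D = fmean (\<lambda>x. ln \<bar>f' x\<bar>) f"
  define M where "M = (\<integral>x. f x powr lam \<partial>lborel)"
  have q: "q > 0" using p by (simp add: q_def)
  have bne: "\<beta> \<noteq> 0" using alpha by (simp add: \<beta>_def)
  have cpos: "c > 0" using bne by (simp add: c_def)
  have Gp: "Gamma (1/q) > 0" using q by (intro Gamma_real_pos) simp
  have a: "a > 0" using q Gp by (simp add: a_def)
  have Gn: "Gamma (1/q) \<noteq> 0" using Gp by linarith
  note pcs = common_pieces[OF supp(2) dens fin_S fin_D]
  have P4: "((\<lambda>x. f x powr lam) has_integral M) I"
  proof -
    have "integrable lborel (\<lambda>x. f x powr lam)" using fin_N by (simp add: lam_def \<beta>_def q_def)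
    from abs_hasint[OF lborel_to_abs[OF this]] show ?thesis using supp(2) by (auto simp: M_def)
  qed
  have key: "ln (a/s) - M / (c * s) powr q + D + \<alpha> * S \<le> 1/2 - 1" if s: "s > 0" for s
  proof (rule core[where G="\<lambda>x. a/s * exp (-((x/s) powr q))" and T="{0<..}" and \<beta>=\<beta> and c=c
        and I=I and f=f and f'=f'])
    show "is_interval I" "open I" by (fact I)+
    show "\<forall>x\<in>I. f x > 0" by (fact supp(1))
    show "\<forall>x\<in>I. (f has_real_derivative f' x) (at x)" by (fact deriv)
    show "\<forall>x\<in>I. f' x < 0" by (fact decr)
    show "\<beta> = 2 - \<alpha>" "\<beta> \<noteq> 0" "c = \<bar>\<beta>\<bar>" using alpha by (simp_all add: \<beta>_def c_def)
    show "a/s * exp (-((x/s) powr q)) > 0" if "x > 0" for x using a s by simp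
    show "{0::real<..} \<in> sets lebesgue" by (simp add: open_sets_lebesgue)
    show "(\<lambda>u. f u powr \<beta> / c) ` I \<subseteq> {0<..}"
    proof
      fix y assume "y \<in> (\<lambda>u. f u powr \<beta> / c) ` I"
      then obtain u where u: "u \<in> I" "y = f u powr \<beta> / c" by blast
      have "f u > 0" using supp(1) u(1) by blast
      then have "f u powr \<beta> > 0" by simp
      then show "y \<in> {0<..}" using u(2) cpos by simp
    qed
    have E: "(\<lambda>x. exp (-((x/s) powr q))) absolutely_integrable_on {0<..} \<and>
         integral {0<..} (\<lambda>x. exp (-((x/s) powr q))) = s * Gamma (1/q) / q"
      using exp_powr_int[OF q s] .
    show "(\<lambda>x. a/s * exp (-((x/s) powr q))) absolutely_integrable_on {0<..}"
      by (rule abs_int_cmult[OF conjunct1[OF E]])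
    show "\<forall>x\<in>{0<..}. 0 \<le> a/s * exp (-((x/s) powr q))" using a s by simp
    have "integral {0<..} (\<lambda>x. a/s * exp (-((x/s) powr q))) = a/s * (s * Gamma (1/q) / q)"
      by (simp only: integral_mult_right conjunct2[OF E])
    also have "\<dots> = 1/2" using s q Gn unfolding a_def by (simp add: field_simps)
    finally show "integral {0<..} (\<lambda>x. a/s * exp (-((x/s) powr q))) \<le> 1/2" by simp
    show "(f has_integral 1) I" by (rule pcs(1))
    show "((\<lambda>x. f x * ln (f x)) has_integral (-S)) I" using pcs(2) by (simp add: S_def)
    show "((\<lambda>x. ln \<bar>f' x\<bar> * f x) has_integral D) I" using pcs(3) by (simp add: D_def)
    have h5: "((\<lambda>u. ln (a/s) * f u - f u powr lam / (c * s) powr q) has_integral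
              (ln (a/s) * 1 - M / (c * s) powr q)) I"
      by (intro has_integral_diff has_integral_mult_right has_integral_divide pcs(1) P4)
    have h6: "((\<lambda>u. f u * ln (a/s * exp (-(((f u powr \<beta> / c)/s) powr q)))) has_integral
              (ln (a/s) * 1 - M / (c * s) powr q)) I"
    proof (rule has_integral_eq[OF _ h5])
      fix u assume u: "u \<in> I"
      have fu: "f u > 0" using supp(1) u by blast
      have "((f u powr \<beta> / c)/s) powr q = (f u powr \<beta>) powr q / (c * s) powr q"
        using fu cpos s by (simp add: powr_divide)
      also have "\<dots> = f u powr (\<beta> * q) / (c * s) powr q" by (simp add: powr_powr)
      finally have e1: "((f u powr \<beta> / c)/s) powr q = f u powr (\<beta> * q) / (c * s) powr q" .
      have e2: "f u * f u powr (\<beta> * q) = f u powr lam"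
        using fu by (simp add: lam_def powr_add)
      have "ln (a/s * exp (-(((f u powr \<beta> / c)/s) powr q))) = ln (a/s) - ((f u powr \<beta> / c)/s) powr q"
      proof -
        have as: "a/s > 0" using a s by simp
        have lnm: "\<And>Z. ln (a/s * exp Z) = ln (a/s) + Z"
          using as a s by (simp only: ln_mult) simp
        show ?thesis by (simp only: lnm)
      qed
      then have h1: "ln (a/s * exp (-(((f u powr \<beta> / c)/s) powr q)))
          = ln (a/s) - f u powr (\<beta> * q) / (c * s) powr q" unfolding e1 .
      have alg: "\<And>F A P Q :: real. F * (A - P / Q) = A * F - F * P / Q" by (simp add: algebra_simps)
      have "f u * ln (a/s * exp (-(((f u powr \<beta> / c)/s) powr q)))
          = ln (a/s) * f u - f u * f u powr (\<beta> * q) / (c * s) powr q"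
        unfolding h1 by (rule alg)
      then show "ln (a/s) * f u - f u powr lam / (c * s) powr q =
          f u * ln (a/s * exp (-(((f u powr \<beta> / c)/s) powr q)))" by (simp only: e2)
    qed
    then show "((\<lambda>u. f u * ln (a/s * exp (-(((f u powr \<beta> / c)/s) powr q)))) has_integral
              (ln (a/s) - M / (c * s) powr q)) I" by (simp only: mult_1_right)
  qed
  have M0: "M \<ge> 0" unfolding M_def by (intro Bochner_Integration.integral_nonneg) simp
  have Mpos: "M > 0"
  proof (rule ccontr)
    assume "\<not> M > 0"
    then have M00: "M = 0" using M0 by simp
    define s where "s = a * exp (D + \<alpha> * S)"
    have s: "s > 0" using a by (simp add: s_def)
    have "a / s = 1 / exp (D + \<alpha> * S)" using a by (simp add: s_def)
    then have "ln (a / s) = - (D + \<alpha> * S)" by (simp add: ln_div)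
    then show False using key[OF s] M00 by simp
  qed
  define s0 where "s0 = (q * M) powr (1/q) / c"
  have qM: "q * M > 0" using q Mpos by simp
  have "(q * M) powr (1/q) > 0" using qM by (simp only: powr_gt_zero)
  then have s0: "s0 > 0" using cpos unfolding s0_def by (rule divide_pos_pos)
  have cs0: "(c * s0) powr q = q * M"
  proof -
    have "c * s0 = (q * M) powr (1/q)" using cpos by (simp add: s0_def)
    then have "(c * s0) powr q = (q * M) powr (1/q * q)" by (simp add: powr_powr)
    also have "\<dots> = q * M" using q qM by simp
    finally show ?thesis .
  qed
  have lns0: "ln s0 = (1/q) * ln q + (1/q) * ln M - ln c"
  proof -
    have "ln s0 = ln ((q * M) powr (1/q)) - ln c" using qM cpos q Mpos by (simp add: s0_def ln_div)
    also have "\<dots> = (1/q) * ln (q * M) - ln c" using qM by (simp add: ln_powr)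
    also have "ln (q * M) = ln q + ln M" using q Mpos by (simp add: ln_mult)
    finally show ?thesis by (simp add: algebra_simps)
  qed
  have lnas: "ln (a / s0) = ln a - ln s0" using a s0 by (simp add: ln_div)
  have Mfrac: "M / (c * s0) powr q = 1/q" using cs0 Mpos q by simp
  have K: "ln a + ln c - (1/q) * ln q - (1/q) * ln M - 1/q + D + \<alpha> * S \<le> -1/2"
    using key[OF s0] unfolding Mfrac lnas lns0 by simp
  have pc: "pconj p = ereal q" using p by (simp add: pconj_def q_def)
  have lamE: "1 + ereal (2 - \<alpha>) * pconj p = ereal lam" by (simp add: pc lam_def \<beta>_def)
  have expo: "1 / (1 - lam) * (\<alpha> - 2) = 1/q"
    using bne q by (simp add: lam_def \<beta>_def field_simps)
  have RN: "renyiN (1 + ereal (2 - \<alpha>) * pconj p) f powr (\<alpha> - 2) = M powr (1/q)"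
  proof -
    have "renyiN (ereal lam) f = M powr (1 / (1 - lam))" by (simp add: renyiN_def M_def)
    then have "renyiN (ereal lam) f powr (\<alpha> - 2) = M powr (1 / (1 - lam) * (\<alpha> - 2))"
      by (simp add: powr_powr)
    then show ?thesis unfolding lamE expo .
  qed
  have K0p: "K0 p = a * q powr (-1/q) * exp (-1/q)"
    using K0_gt1[OF p] unfolding q_def[symmetric] a_def[symmetric] .
  define Lh where "Lh = M powr (1/q) * exp (- \<alpha> * S)"
  define Rh where "Rh = c * (a * q powr (-1/q) * exp (-1/q)) * exp D"
  have Lh: "Lh > 0" using Mpos by (simp add: Lh_def)
  have Rh: "Rh > 0" using cpos a q by (simp add: Rh_def)
  have lnL: "ln Lh = (1/q) * ln M + (- \<alpha> * S)"
    using Mpos by (simp add: Lh_def ln_mult ln_powr)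
  have lnR: "ln Rh = ln c + (ln a + ((-1/q) * ln q + (-1/q))) + D"
    using cpos a q by (simp add: Rh_def ln_mult ln_powr)
  have "ln Rh < ln Lh" unfolding lnL lnR using K by (simp add: algebra_simps)
  then have "Rh < Lh" using Lh Rh by simp
  then show ?thesis
    unfolding RN K0p by (simp add: Lh_def Rh_def c_def \<beta>_def S_def D_def)
qed

lemma ae_bound_on_I:
  fixes f h :: "real \<Rightarrow> real" and I :: "real set"
  assumes fm: "f \<in> borel_measurable lborel"
    and pos: "\<forall>x\<in>I. f x > 0" and I: "open I"
    and cont: "\<And>u. u \<in> I \<Longrightarrow> isCont h u"
  shows "\<forall>u\<in>I. ereal (h u) \<le> esssup (density lborel (\<lambda>x. ennreal (f x))) (\<lambda>x. ereal (h x))"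
proof
  let ?E = "esssup (density lborel (\<lambda>x. ennreal (f x))) (\<lambda>x. ereal (h x))"
  fix u assume u: "u \<in> I"
  have fmE: "(\<lambda>x. ennreal (f x)) \<in> borel_measurable lborel" using fm by measurable
  have "AE x in density lborel (\<lambda>x. ennreal (f x)). ereal (h x) \<le> ?E" by (rule esssup_AE)
  then have "AE x in lborel. 0 < ennreal (f x) \<longrightarrow> ereal (h x) \<le> ?E"
    using AE_density[OF fmE, where P="\<lambda>x. ereal (h x) \<le> ?E"] by simp
  then have ae: "AE x in lborel. x \<in> I \<longrightarrow> ereal (h x) \<le> ?E"
  proof (rule eventually_mono)
    fix x assume hx: "0 < ennreal (f x) \<longrightarrow> ereal (h x) \<le> ?E"
    show "x \<in> I \<longrightarrow> ereal (h x) \<le> ?E"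
    proof
      assume "x \<in> I"
      then have "f x > 0" using pos by blast
      then have "0 < ennreal (f x)" by simp
      then show "ereal (h x) \<le> ?E" using hx by blast
    qed
  qed
  show "ereal (h u) \<le> ?E" by (rule ae_cont_bound[OF ae I u cont[OF u]])
qed

lemma bound_Lb:
  fixes \<alpha> :: real and f f' :: "real \<Rightarrow> real" and I :: "real set"
  assumes alpha: "\<alpha> \<noteq> 2"
    and I: "open I" "I \<noteq> {}"
    and supp: "\<forall>x\<in>I. f x > 0"
    and deriv: "\<forall>x\<in>I. (f has_real_derivative f' x) (at x)"
    and fm: "f \<in> borel_measurable lborel"
    and fin_Npos: "\<alpha> < 2 \<Longrightarrow> esssup (density lborel f) (\<lambda>x. ereal (f x)) < \<infinity>"
    and fin_Nneg: "\<alpha> > 2 \<Longrightarrow> esssup (density lborel f) (\<lambda>x. ereal (1 / f x)) < \<infinity>"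
  obtains Lb where "Lb > 0"
    "renyiN (1 + ereal (2 - \<alpha>) * pconj 1) f powr (\<alpha> - 2) = Lb powr (2 - \<alpha>)"
    "\<forall>u\<in>I. f u powr (2 - \<alpha>) \<le> Lb powr (2 - \<alpha>)"
proof -
  obtain u0 where u0: "u0 \<in> I" using I(2) by blast
  have fu0: "f u0 > 0" using supp u0 by blast
  have cf: "isCont f u" if "u \<in> I" for u using deriv that DERIV_isCont by blast
  have inv_pow: "(1 / L) powr (\<alpha> - 2) = L powr (2 - \<alpha>)" if "L > 0" for L :: real
  proof -
    have "(1 / L) powr (\<alpha> - 2) = 1 / L powr (\<alpha> - 2)" using that by (simp add: powr_divide)
    also have "\<dots> = L powr (- (\<alpha> - 2))" by (rule powr_minus_divide[symmetric])
    also have "- (\<alpha> - 2) = 2 - \<alpha>" by simp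
    finally show ?thesis .
  qed
  show ?thesis
  proof (cases "\<alpha> < 2")
    case True
    let ?E = "esssup (density lborel (\<lambda>x. ennreal (f x))) (\<lambda>x. ereal (f x))"
    have bd: "\<forall>u\<in>I. ereal (f u) \<le> ?E"
      by (rule ae_bound_on_I[OF fm supp I(1) cf])
    have Efin: "?E < \<infinity>" using fin_Npos[OF True] .
    have "ereal (f u0) \<le> ?E" using bd u0 by blast
    then obtain Lb where Lb: "?E = ereal Lb" using Efin by (cases ?E) auto
    have Lbpos: "Lb > 0" using \<open>ereal (f u0) \<le> ?E\<close> fu0 Lb by simp
    have pc: "1 + ereal (2 - \<alpha>) * pconj 1 = \<infinity>" using True by (simp add: pconj_def)
    have RN: "renyiN (1 + ereal (2 - \<alpha>) * pconj 1) f = 1 / Lb"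
      unfolding pc renyiN_def using Lb by simp
    show ?thesis
    proof (rule that[OF Lbpos])
      show "renyiN (1 + ereal (2 - \<alpha>) * pconj 1) f powr (\<alpha> - 2) = Lb powr (2 - \<alpha>)"
        unfolding RN using inv_pow[OF Lbpos] .
      show "\<forall>u\<in>I. f u powr (2 - \<alpha>) \<le> Lb powr (2 - \<alpha>)"
      proof
        fix u assume u: "u \<in> I"
        have "f u \<le> Lb" using bd u Lb by auto
        moreover have "f u > 0" using supp u by blast
        ultimately show "f u powr (2 - \<alpha>) \<le> Lb powr (2 - \<alpha>)" using True
          by (intro powr_mono2) auto
      qed
    qed
  next
    case False
    then have a2: "\<alpha> > 2" using alpha by simp
    let ?E = "esssup (density lborel (\<lambda>x. ennreal (f x))) (\<lambda>x. ereal (1 / f x))"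
    have ci: "isCont (\<lambda>x. 1 / f x) u" if "u \<in> I" for u
    proof -
      have "f u \<noteq> 0" using supp that by auto
      then show ?thesis using cf[OF that] by (intro continuous_intros) auto
    qed
    have bd: "\<forall>u\<in>I. ereal (1 / f u) \<le> ?E"
      by (rule ae_bound_on_I[OF fm supp I(1) ci])
    have Efin: "?E < \<infinity>" using fin_Nneg[OF a2] .
    have "ereal (1 / f u0) \<le> ?E" using bd u0 by blast
    then obtain R where R: "?E = ereal R" using Efin by (cases ?E) auto
    have Rpos: "R > 0" using \<open>ereal (1 / f u0) \<le> ?E\<close> fu0 R
      by (metis ereal_less_eq(3) less_le_trans zero_less_divide_1_iff)
    define Lb where "Lb = 1 / R"
    have Lbpos: "Lb > 0" using Rpos by (simp add: Lb_def)
    have pc: "1 + ereal (2 - \<alpha>) * pconj 1 = - \<infinity>" using a2 by (simp add: pconj_def)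
    have RN: "renyiN (1 + ereal (2 - \<alpha>) * pconj 1) f = 1 / Lb"
      unfolding pc renyiN_def using R by (simp add: Lb_def)
    show ?thesis
    proof (rule that[OF Lbpos])
      show "renyiN (1 + ereal (2 - \<alpha>) * pconj 1) f powr (\<alpha> - 2) = Lb powr (2 - \<alpha>)"
        unfolding RN using inv_pow[OF Lbpos] .
      show "\<forall>u\<in>I. f u powr (2 - \<alpha>) \<le> Lb powr (2 - \<alpha>)"
      proof
        fix u assume u: "u \<in> I"
        have fu: "f u > 0" using supp u by blast
        have "1 / f u \<le> R" using bd u R by auto
        then have "Lb \<le> f u" using fu Rpos unfolding Lb_def by (simp add: field_simps)
        then show "f u powr (2 - \<alpha>) \<le> Lb powr (2 - \<alpha>)" using a2 Lbpos
          by (intro powr_mono2') auto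
      qed
    qed
  qed
qed

lemma case_eq1:
  fixes \<alpha> :: real and f f' :: "real \<Rightarrow> real" and I :: "real set"
  assumes alpha: "\<alpha> \<noteq> 2"
    and I: "is_interval I" "open I" "I \<noteq> {}"
    and supp: "\<forall>x\<in>I. f x > 0" "\<forall>x. x \<notin> I \<longrightarrow> f x = 0"
    and deriv: "\<forall>x\<in>I. (f has_real_derivative f' x) (at x)"
    and decr: "\<forall>x\<in>I. f' x < 0"
    and dens: "integrable lborel f" "(\<integral>x. f x \<partial>lborel) = 1"
    and fin_S: "integrable lborel (\<lambda>x. f x * ln (f x))"
    and fin_D: "integrable lborel (\<lambda>x. ln \<bar>f' x\<bar> * f x)"
    and fin_Npos: "\<alpha> < 2 \<Longrightarrow> esssup (density lborel f) (\<lambda>x. ereal (f x)) < \<infinity>"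
    and fin_Nneg: "\<alpha> > 2 \<Longrightarrow> esssup (density lborel f) (\<lambda>x. ereal (1 / f x)) < \<infinity>"
  shows "renyiN (1 + ereal (2 - \<alpha>) * pconj 1) f powr (\<alpha> - 2) * exp (- \<alpha> * shannon f)
           > \<bar>2 - \<alpha>\<bar> * K0 1 * exp (fmean (\<lambda>x. ln \<bar>f' x\<bar>) f)"
proof -
  have fm: "f \<in> borel_measurable lborel" using dens(1) by auto
  obtain Lb where Lb: "Lb > 0"
    "renyiN (1 + ereal (2 - \<alpha>) * pconj 1) f powr (\<alpha> - 2) = Lb powr (2 - \<alpha>)"
    "\<forall>u\<in>I. f u powr (2 - \<alpha>) \<le> Lb powr (2 - \<alpha>)"
    using bound_Lb[OF alpha I(2,3) supp(1) deriv fm fin_Npos fin_Nneg] by blast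
  define \<beta> where "\<beta> = 2 - \<alpha>"
  define c where "c = \<bar>\<beta>\<bar>"
  define S where "S = shannon f"
  define D where "D = fmean (\<lambda>x. ln \<bar>f' x\<bar>) f"
  define m where "m = Lb powr \<beta> / c"
  have bne: "\<beta> \<noteq> 0" using alpha by (simp add: \<beta>_def)
  have cpos: "c > 0" using bne by (simp add: c_def)
  have "Lb powr \<beta> > 0" using Lb(1) by simp
  then have mpos: "m > 0" using cpos unfolding m_def by (rule divide_pos_pos)
  note pcs = common_pieces[OF supp(2) dens fin_S fin_D]
  have key: "1 * ln (1/m) + D + \<alpha> * S \<le> 1 - 1"
  proof (rule core[where G="\<lambda>x. 1/m" and T="{0..m}" and \<beta>=\<beta> and c=c
        and I=I and f=f and f'=f'])
    show "is_interval I" "open I" by (fact I)+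
    show "\<forall>x\<in>I. f x > 0" by (fact supp(1))
    show "\<forall>x\<in>I. (f has_real_derivative f' x) (at x)" by (fact deriv)
    show "\<forall>x\<in>I. f' x < 0" by (fact decr)
    show "\<beta> = 2 - \<alpha>" "\<beta> \<noteq> 0" "c = \<bar>\<beta>\<bar>" using alpha by (simp_all add: \<beta>_def c_def)
    show "1/m > 0" if "x > 0" for x :: real using mpos by simp
    show "{0..m} \<in> sets lebesgue" by simp
    show "(\<lambda>u. f u powr \<beta> / c) ` I \<subseteq> {0..m}"
    proof
      fix y assume "y \<in> (\<lambda>u. f u powr \<beta> / c) ` I"
      then obtain u where u: "u \<in> I" "y = f u powr \<beta> / c" by blast
      have "f u powr \<beta> \<le> Lb powr \<beta>" using Lb(3) u(1) by (simp add: \<beta>_def)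
      then have "f u powr \<beta> / c \<le> m" using cpos unfolding m_def by (simp add: divide_right_mono)
      moreover have "0 \<le> f u powr \<beta> / c" using cpos by simp
      ultimately show "y \<in> {0..m}" using u(2) by simp
    qed
    show "(\<lambda>x. 1/m) absolutely_integrable_on {0..m}"
      by (rule nonnegative_absolutely_integrable_1) (use mpos in auto)
    show "\<forall>x\<in>{0..m}. 0 \<le> 1/m" using mpos by simp
    show "integral {0..m} (\<lambda>x. 1/m) \<le> 1" using mpos by simp
    show "(f has_integral 1) I" by (rule pcs(1))
    show "((\<lambda>x. f x * ln (f x)) has_integral (-S)) I" using pcs(2) by (simp add: S_def)
    show "((\<lambda>x. ln \<bar>f' x\<bar> * f x) has_integral D) I" using pcs(3) by (simp add: D_def)
    show "((\<lambda>u. f u * ln (1/m)) has_integral (1 * ln (1/m))) I"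
      by (rule has_integral_mult_left[OF pcs(1)])
  qed
  then have "D + \<alpha> * S \<le> ln m" using mpos by (simp add: ln_div)
  then have em: "exp (D + \<alpha> * S) \<le> m" using mpos by (simp add: ln_ge_iff)
  have Lbm: "Lb powr \<beta> = c * m" using cpos by (simp add: m_def)
  have "c * exp D = c * exp (D + \<alpha> * S) * exp (- \<alpha> * S)" by (simp add: exp_add[symmetric])
  also have "\<dots> \<le> c * m * exp (- \<alpha> * S)" using em cpos by simp
  finally have "c * exp D \<le> Lb powr \<beta> * exp (- \<alpha> * S)" unfolding Lbm .
  moreover have "c * (1/2) * exp D < c * exp D" using cpos by simp
  ultimately show ?thesis
    unfolding Lb(2) K0_1 by (simp add: \<beta>_def c_def S_def D_def)
qed

theorem proposition12:
  fixes \<alpha> p :: real and f f' :: "real \<Rightarrow> real" and I :: "real set"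
  assumes alpha: "\<alpha> \<noteq> 2" and p: "p \<ge> 1"
    and I: "is_interval I" "open I" "I \<noteq> {}"
    and supp: "\<forall>x\<in>I. f x > 0" "\<forall>x. x \<notin> I \<longrightarrow> f x = 0"
    and deriv: "\<forall>x\<in>I. (f has_real_derivative f' x) (at x)"
    and decr: "\<forall>x\<in>I. f' x < 0"
    and dens: "integrable lborel f" "(\<integral>x. f x \<partial>lborel) = 1"
    and fin_S: "integrable lborel (\<lambda>x. f x * ln (f x))"
    and fin_D: "integrable lborel (\<lambda>x. ln \<bar>f' x\<bar> * f x)"
    and fin_N: "p > 1 \<Longrightarrow> integrable lborel (\<lambda>x. f x powr (1 + (2 - \<alpha>) * (p / (p - 1))))"
    and fin_Npos: "p = 1 \<Longrightarrow> \<alpha> < 2 \<Longrightarrow> esssup (density lborel f) (\<lambda>x. ereal (f x)) < \<infinity>"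
    and fin_Nneg: "p = 1 \<Longrightarrow> \<alpha> > 2 \<Longrightarrow> esssup (density lborel f) (\<lambda>x. ereal (1 / f x)) < \<infinity>"
  shows "(renyiN (1 + ereal (2 - \<alpha>) * pconj p) f powr (\<alpha> - 2) * exp (- \<alpha> * shannon f)
           \<ge> \<bar>2 - \<alpha>\<bar> * K0 p * exp (fmean (\<lambda>x. ln \<bar>f' x\<bar>) f)) \<and>
         (renyiN (1 + ereal (2 - \<alpha>) * pconj p) f powr (\<alpha> - 2) * exp (- \<alpha> * shannon f)
           = \<bar>2 - \<alpha>\<bar> * K0 p * exp (fmean (\<lambda>x. ln \<bar>f' x\<bar>) f)
         \<longrightarrow> up_transform_eq \<alpha> (g_p1 p) f)"
proof -
  have strict: "renyiN (1 + ereal (2 - \<alpha>) * pconj p) f powr (\<alpha> - 2) * exp (- \<alpha> * shannon f)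
           > \<bar>2 - \<alpha>\<bar> * K0 p * exp (fmean (\<lambda>x. ln \<bar>f' x\<bar>) f)"
  proof (cases "p > 1")
    case True
    show ?thesis by (rule case_gt1[OF alpha True I supp deriv decr dens fin_S fin_D fin_N[OF True]])
  next
    case False
    then have p1: "p = 1" using p by simp
    show ?thesis unfolding p1
      by (rule case_eq1[OF alpha I supp deriv decr dens fin_S fin_D fin_Npos[OF p1] fin_Nneg[OF p1]])
  qed
  then show ?thesis by simp
qed

end
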